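(* Let $S>0$, $T>0$, $\sigma_{LN}>0$ and let $C:=\mathrm{BS}(S,S,T,\sigma_{LN})$ be the at-the-money ($K=S$) Black–Scholes call price with zero interest rate, where $\mathrm{BS}(S,K,T,\sigma)=S\,\mathcal N(d_+)-K\,\mathcal N(d_-)$, $d_\pm=\frac{\ln(S/K)\pm\sigma^2T/2}{\sigma\sqrt T}$, $\mathcal N$ the standard normal distribution function. Define $\eta_0:=1$ and, for $k\ge1$, $\eta_k:=\sum_{j=0}^{k-1}\frac{\eta_j\,\eta_{k-1-j}}{(j+1)(2j+1)}$. Then $$\sigma_{LN}=\sqrt{\frac{2\pi}{T}}\,\frac CS\sum_{k=0}^\infty\frac{\pi^k\eta_k}{4^k(2k+1)}\Big(\frac CS\Big)^{2k}.$$ *)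

theory Defs
  imports "HOL-Probability.Probability"
begin

definition Phi :: "real \<Rightarrow> real" where
  "Phi x = cdf (density lborel std_normal_density) x"

definition d_plus :: "real \<Rightarrow> real \<Rightarrow> real \<Rightarrow> real \<Rightarrow> real" where
  "d_plus S K T \<sigma> = (ln (S / K) + \<sigma>\<^sup>2 * T / 2) / (\<sigma> * sqrt T)"

definition d_minus :: "real \<Rightarrow> real \<Rightarrow> real \<Rightarrow> real \<Rightarrow> real" where
  "d_minus S K T \<sigma> = (ln (S / K) - \<sigma>\<^sup>2 * T / 2) / (\<sigma> * sqrt T)"

definition BS :: "real \<Rightarrow> real \<Rightarrow> real \<Rightarrow> real \<Rightarrow> real" where
  "BS S K T \<sigma> = S * Phi (d_plus S K T \<sigma>) - K * Phi (d_minus S K T \<sigma>)"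

function eta :: "nat \<Rightarrow> real" where
  "eta 0 = 1"
| "eta (Suc k) = (\<Sum>j<Suc k. eta j * eta (k - j) / (real (j + 1) * real (2 * j + 1)))"
  by pat_completeness auto
termination by (relation "Wellfounded.measure id") auto

end

theory Submission
  imports Defs "HOL-Computational_Algebra.Formal_Power_Series"
begin


lemma Phi_diff:
  assumes "v \<le> x"
  shows "Phi x - Phi v = (LBINT y=v..x. std_normal_density y)"
proof (cases "v = x")
  case True then show ?thesis by simp
next
  case False
  with assms have vx: "v < x" by simp
  interpret real_distribution "density lborel std_normal_density"
    by (rule real_dist_normal_dist)
  have "Phi x - Phi v = measure (density lborel std_normal_density) {v<..x}"
    unfolding Phi_def using cdf_diff_eq[OF vx] by simp
  also have "\<dots> = integral\<^sup>L (density lborel std_normal_density) (indicator {v<..x})"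
    by simp
  also have "\<dots> = integral\<^sup>L lborel (\<lambda>y. std_normal_density y *\<^sub>R indicator {v<..x} y)"
    by (rule integral_density) (auto simp: normal_density_nonneg)
  also have "\<dots> = (LBINT y : {v<..x}. std_normal_density y)"
    by (simp add: set_lebesgue_integral_def mult.commute)
  also have "\<dots> = (LBINT y=v..x. std_normal_density y)"
    using vx by (simp add: interval_integral_Ioc)
  finally show ?thesis .
qed

lemma Phi_deriv: "DERIV Phi x :> std_normal_density x"
proof -
  have cont: "continuous_on {x-1..x+1} std_normal_density"
    unfolding std_normal_density_def by (intro continuous_intros) auto
  have "((\<lambda>u. LBINT y=x-1..u. std_normal_density y) has_vector_derivative std_normal_density x) (at x within {x-1..x+1})"
    by (rule interval_integral_FTC2[OF _ _ cont]) auto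
  then have "((\<lambda>u. Phi (x-1) + (LBINT y=x-1..u. std_normal_density y)) has_vector_derivative std_normal_density x) (at x within {x-1..x+1})"
    by (auto intro!: derivative_eq_intros)
  then have "(Phi has_vector_derivative std_normal_density x) (at x within {x-1..x+1})"
    by (rule has_vector_derivative_transform[rotated 2]) (auto simp: Phi_diff[symmetric])
  then have "(Phi has_vector_derivative std_normal_density x) (at x)"
    by (simp add: at_within_Icc_at)
  then show ?thesis by (simp add: has_real_derivative_iff_has_vector_derivative)
qed

definition G :: "real \<Rightarrow> real" where "G y = Phi y - Phi (- y)"

lemma G_deriv: "DERIV G y :> sqrt (2/pi) * exp (-(y\<^sup>2)/2)"
proof -
  have "DERIV G y :> std_normal_density y - std_normal_density (-y) * (-1)"
    unfolding G_def
    by (rule derivative_eq_intros Phi_deriv[THEN DERIV_chain2] | simp)+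
  moreover have "std_normal_density y - std_normal_density (-y) * (-1) = sqrt (2/pi) * exp (-(y\<^sup>2)/2)"
    by (simp add: std_normal_density_def real_sqrt_divide real_sqrt_mult field_simps)
  ultimately show ?thesis by simp
qed

lemma G_mono: "x < y \<Longrightarrow> G x < G y"
  by (rule DERIV_pos_imp_increasing[of x y G]) (auto intro!: G_deriv exI)

lemma G_le_iff: "G x \<le> G y \<longleftrightarrow> x \<le> y"
  using G_mono[of x y] G_mono[of y x] by (cases x y rule: linorder_cases) auto

lemma G_0: "G 0 = 0" by (simp add: G_def)



definition qq :: real where "qq = pi / 4"
definition bb :: "nat \<Rightarrow> real" where "bb k = eta k * qq ^ k"
definition cc :: "nat \<Rightarrow> real" where "cc k = bb k / real (2 * k + 1)"
definition conv :: "(nat \<Rightarrow> real) \<Rightarrow> (nat \<Rightarrow> real) \<Rightarrow> nat \<Rightarrow> real" where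
  "conv a b k = (\<Sum>i\<le>k. a i * b (k - i))"

lemma qq_pos: "qq > 0" by (simp add: qq_def)

lemma eta_nonneg: "0 \<le> eta k"
proof (induction k rule: less_induct)
  case (less k)
  show ?case
  proof (cases k)
    case 0 then show ?thesis by simp
  next
    case (Suc m)
    show ?thesis unfolding Suc eta.simps
      by (intro sum_nonneg divide_nonneg_nonneg mult_nonneg_nonneg) (auto intro: less simp: Suc)
  qed
qed

lemma bb_nonneg: "0 \<le> bb k" using eta_nonneg qq_pos by (simp add: bb_def)
lemma cc_nonneg: "0 \<le> cc k" using bb_nonneg by (simp add: cc_def)
lemma bb_0: "bb 0 = 1" by (simp add: bb_def)
lemma bb_cc: "bb k = real (2*k+1) * cc k" by (simp add: cc_def)

lemma bb_rec: "bb (Suc k) = qq * (\<Sum>i\<le>k. bb i * (cc (k - i) / real (k - i + 1)))"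
proof -
  have "bb (Suc k) = qq ^ Suc k * (\<Sum>j\<le>k. eta j * eta (k - j) / (real (j + 1) * real (2 * j + 1)))"
    by (simp add: bb_def lessThan_Suc_atMost mult.commute)
  also have "(\<Sum>j\<le>k. eta j * eta (k - j) / (real (j + 1) * real (2 * j + 1)))
      = (\<Sum>i\<le>k. eta (k - i) * eta i / (real (k - i + 1) * real (2 * (k - i) + 1)))"
    by (rule sum.reindex_bij_witness[where i="\<lambda>i. k - i" and j="\<lambda>i. k - i"]) auto
  also have "qq ^ Suc k * \<dots> = qq * (\<Sum>i\<le>k. bb i * (cc (k - i) / real (k - i + 1)))"
    unfolding sum_distrib_left
  proof (intro sum.cong refl)
    fix i assume "i \<in> {..k}"
    then have e: "qq ^ k = qq ^ i * qq ^ (k - i)"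
      by (simp add: power_add[symmetric])
    then show "qq ^ Suc k * (eta (k - i) * eta i / (real (k - i + 1) * real (2 * (k - i) + 1))) =
         qq * (bb i * (cc (k - i) / real (k - i + 1)))"
      by (simp add: bb_def cc_def e field_simps)
  qed
  finally show ?thesis .
qed

definition WW :: "real fps" where "WW = Abs_fps bb"
definition UU :: "real fps" where "UU = Abs_fps (\<lambda>n. if n = 0 then 0 else cc (n - 1) / real n)"
definition CC :: "real fps" where "CC = Abs_fps cc"

lemma WU: "WW * (1 - fps_const qq * UU) = 1"
proof (rule fps_ext)
  fix n
  have "fps_nth (WW * (1 - fps_const qq * UU)) n = bb n - qq * fps_nth (WW * UU) n"
    by (simp add: ring_distribs WW_def mult.left_commute[of _ "fps_const qq"])
  also have "\<dots> = fps_nth 1 n"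
  proof (cases n)
    case 0 then show ?thesis by (simp add: fps_mult_nth WW_def UU_def bb_0)
  next
    case (Suc k)
    have "fps_nth (WW * UU) (Suc k) = (\<Sum>i=0..Suc k. bb i * fps_nth UU (Suc k - i))"
      by (simp add: fps_mult_nth WW_def)
    also have "\<dots> = (\<Sum>i\<le>k. bb i * (cc (k - i) / real (k - i + 1)))"
      by (simp add: atMost_atLeast0 UU_def Suc_diff_le)
    finally show ?thesis using Suc by (simp add: bb_rec)
  qed
  finally show "fps_nth (WW * (1 - fps_const qq * UU)) n = fps_nth 1 n" .
qed

lemma dU: "fps_deriv UU = CC"
  by (rule fps_ext) (simp add: UU_def CC_def)

lemma dW: "fps_deriv WW = fps_const qq * CC * (WW * WW)"
proof -
  have "fps_deriv (WW * (1 - fps_const qq * UU)) = 0" by (simp add: WU)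
  then have "fps_deriv WW * (1 - fps_const qq * UU) = fps_const qq * WW * CC"
    by (simp add: dU algebra_simps)
  then have "fps_deriv WW * (WW * (1 - fps_const qq * UU)) = fps_const qq * CC * (WW * WW)"
    by (metis (no_types, lifting) mult.assoc mult.commute)
  then show ?thesis by (simp add: WU)
qed

lemma cubic: "diffs bb k = qq * conv cc (conv bb bb) k"
proof -
  have "diffs bb k = fps_nth (fps_deriv WW) k" by (simp add: diffs_def WW_def)
  also have "\<dots> = qq * fps_nth (CC * (WW * WW)) k" by (simp add: dW mult.assoc)
  also have "fps_nth (CC * (WW * WW)) k = conv cc (conv bb bb) k"
    by (simp add: fps_mult_nth conv_def atMost_atLeast0 CC_def WW_def)
  finally show ?thesis .
qed



definition ps :: "(nat \<Rightarrow> real) \<Rightarrow> real \<Rightarrow> real" where "ps a t = (\<Sum>k. a k * t ^ k)"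

lemma conv_nonneg: "(\<And>k. 0 \<le> a k) \<Longrightarrow> (\<And>k. 0 \<le> b k) \<Longrightarrow> 0 \<le> conv a b k"
  unfolding conv_def by (intro sum_nonneg mult_nonneg_nonneg) auto

lemma ps_cauchy:
  assumes a: "\<And>k. 0 \<le> a k" and b: "\<And>k. 0 \<le> b k" and t: "0 \<le> t"
    and sa: "summable (\<lambda>k. a k * t^k)" and sb: "summable (\<lambda>k. b k * t^k)"
  shows "(\<lambda>k. conv a b k * t^k) sums (ps a t * ps b t)"
proof -
  have na: "summable (\<lambda>k. norm (a k * t^k))" using sa a t by (simp add: abs_of_nonneg)
  have nb: "summable (\<lambda>k. norm (b k * t^k))" using sb b t by (simp add: abs_of_nonneg)
  have "(\<lambda>k. \<Sum>i\<le>k. a i * t^i * (b (k - i) * t^(k - i))) sums (ps a t * ps b t)"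
    using Cauchy_product_sums[OF na nb] unfolding ps_def .
  moreover have "(\<lambda>k. \<Sum>i\<le>k. a i * t^i * (b (k - i) * t^(k - i))) = (\<lambda>k. conv a b k * t^k)"
  proof
    fix k
    show "(\<Sum>i\<le>k. a i * t^i * (b (k - i) * t^(k - i))) = conv a b k * t^k"
      unfolding conv_def sum_distrib_right
    proof (intro sum.cong refl)
      fix i assume "i \<in> {..k}"
      then have "t^i * t^(k - i) = t^k" by (simp add: power_add[symmetric])
      then show "a i * t^i * (b (k - i) * t^(k - i)) = a i * b (k - i) * t^k"
        by (metis mult.assoc mult.left_commute)
    qed
  qed
  ultimately show ?thesis by simp
qed

lemma ps_shift:
  assumes "summable (\<lambda>n. diffs a n * x^n)"
  shows "(\<lambda>n. real n * a n * x^n) sums (x * ps (diffs a) x)"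
proof -
  have "(\<lambda>n. x * (of_nat n * a n * x^(n - Suc 0))) sums (x * ps (diffs a) x)"
    using sums_mult[OF diffs_equiv[OF assms], of x] unfolding ps_def .
  moreover have "(\<lambda>n. x * (of_nat n * a n * x^(n - Suc 0))) = (\<lambda>n. real n * a n * x^n)"
  proof
    fix n show "x * (of_nat n * a n * x^(n - Suc 0)) = real n * a n * x^n"
      by (cases n) auto
  qed
  ultimately show ?thesis by simp
qed

lemma aux_K: "(a::real) * k = 1 \<Longrightarrow> a * e * (k * w) - 1 = w * e - 1"
proof -
  assume h: "a * k = 1"
  have "a * e * (k * w) = (a * k) * (w * e)" by (simp only: mult_ac)
  then show ?thesis using h by simp
qed

lemma key:
  fixes b c :: "nat \<Rightarrow> real" and s R z :: real
  assumes c0: "\<And>k. 0 \<le> c k" and bc: "\<And>k. b k = real (2*k+1) * c k"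
    and sum1: "summable (\<lambda>k. c k * R^k)" and s: "s = 1 \<or> s = -1"
    and b0: "s * (b 0 - 1) \<le> 0"
    and rec: "\<And>k. s * diffs b k \<le> s * (qq * conv c (conv b b) k)"
    and z: "0 \<le> z" "z^2 < R"
  shows "s * (G (sqrt (pi/2) * z * ps c (z^2)) - z) \<le> 0"
proof -
  have R: "0 < R" using z(2) zero_le_power2[of z] by linarith
  have b0': "\<And>k. 0 \<le> b k" using bc c0 by simp
  have Sc: "summable (\<lambda>k. c k * t^k)" if "\<bar>t\<bar> < R" for t
    by (rule powser_inside[OF sum1]) (use that R in auto)
  have Sdc: "summable (\<lambda>k. diffs c k * t^k)" if "\<bar>t\<bar> < R" for t
    by (rule termdiff_converges[where K=R]) (use that Sc in auto)
  have Sb: "(\<lambda>k. b k * t^k) sums (ps c t + 2 * (t * ps (diffs c) t))" if tt: "\<bar>t\<bar> < R" for t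
  proof -
    have "(\<lambda>k. c k * t^k + 2 * (real k * c k * t^k)) sums (ps c t + 2 * (t * ps (diffs c) t))"
      by (intro sums_add sums_mult ps_shift Sdc tt) (use Sc[OF tt] in \<open>simp add: ps_def summable_sums\<close>)
    moreover have "(\<lambda>k. c k * t^k + 2 * (real k * c k * t^k)) = (\<lambda>k. b k * t^k)"
      by (auto simp: bc algebra_simps)
    ultimately show ?thesis by simp
  qed
  have psb: "ps b t = ps c t + 2 * (t * ps (diffs c) t)" if "\<bar>t\<bar> < R" for t
    using Sb[OF that] unfolding ps_def by (simp add: sums_iff)
  have Dc: "DERIV (ps c) t :> ps (diffs c) t" if "\<bar>t\<bar> < R" for t
    unfolding ps_def by (rule termdiffs_strong[OF sum1]) (use that R in simp)
  have Sb': "summable (\<lambda>k. b k * t^k)" if "\<bar>t\<bar> < R" for t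
    using Sb[OF that] by (simp add: sums_iff)
  have Db: "DERIV (ps b) t :> ps (diffs b) t" if tt: "\<bar>t\<bar> < R" for t
  proof -
    have "summable (\<lambda>k. b k * ((\<bar>t\<bar> + R)/2)^k)" by (rule Sb') (use tt R in auto)
    then show ?thesis
      unfolding ps_def by (rule termdiffs_strong) (use tt R in auto)
  qed
  have Sdb: "summable (\<lambda>k. diffs b k * t^k)" if "\<bar>t\<bar> < R" for t
    by (rule termdiff_converges[where K=R]) (use that Sb' in auto)
  have Ineq: "s * ps (diffs b) t \<le> s * (qq * (ps c t * (ps b t * ps b t)))"
    if t0: "0 \<le> t" and tt: "t < R" for t
  proof -
    have at: "\<bar>t\<bar> < R" using t0 tt by simp
    have bb2: "(\<lambda>k. conv b b k * t^k) sums (ps b t * ps b t)"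
      by (rule ps_cauchy[OF b0' b0' t0 Sb'[OF at] Sb'[OF at]])
    have cbb: "(\<lambda>k. conv c (conv b b) k * t^k) sums (ps c t * ps (conv b b) t)"
      by (rule ps_cauchy[OF c0 conv_nonneg[OF b0' b0'] t0 Sc[OF at]])
         (use bb2 in \<open>simp add: sums_iff\<close>)
    have pbb: "ps (conv b b) t = ps b t * ps b t" using bb2 unfolding ps_def by (simp add: sums_iff)
    have l: "(\<lambda>k. s * (diffs b k * t^k)) sums (s * ps (diffs b) t)"
      unfolding ps_def by (intro sums_mult summable_sums Sdb at)
    have r: "(\<lambda>k. s * qq * (conv c (conv b b) k * t^k)) sums (s * qq * (ps c t * (ps b t * ps b t)))"
      using sums_mult[OF cbb, of "s * qq"] pbb by simp
    have "s * ps (diffs b) t \<le> s * qq * (ps c t * (ps b t * ps b t))"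
    proof (rule sums_le[OF _ l r])
      fix k
      have "s * diffs b k * t^k \<le> s * (qq * conv c (conv b b) k) * t^k"
        by (rule mult_right_mono[OF rec]) (use t0 in simp)
      then show "s * (diffs b k * t^k) \<le> s * qq * (conv c (conv b b) k * t^k)"
        by (simp add: mult.assoc)
    qed
    then show ?thesis by (simp add: mult.assoc)
  qed
  define r where "r t = ps b t * exp (- qq * t * (ps c t)^2)" for t
  have Dr: "DERIV r t :> exp (- qq * t * (ps c t)^2) * (ps (diffs b) t - qq * ps c t * (ps b t * ps b t))"
    if tt: "\<bar>t\<bar> < R" for t
    unfolding r_def
    apply (rule DERIV_cong)
     apply (rule derivative_eq_intros Db[OF tt] Dc[OF tt] refl)+
    apply (simp add: psb[OF tt] algebra_simps power2_eq_square)
    done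
  have r0: "r 0 = b 0" by (simp add: r_def ps_def)
  have rle: "s * r t \<le> s" if t0: "0 \<le> t" and tt: "t < R" for t
  proof -
    have "s * r t \<le> s * r 0"
    proof (rule DERIV_nonpos_imp_nonincreasing[OF t0, of "\<lambda>t. s * r t"])
      fix x assume x: "0 \<le> x" "x \<le> t"
      then have ax: "\<bar>x\<bar> < R" using tt by simp
      have "s * (exp (- qq * x * (ps c x)^2) * (ps (diffs b) x - qq * ps c x * (ps b x * ps b x)))
          = exp (- qq * x * (ps c x)^2) * (s * ps (diffs b) x - s * (qq * (ps c x * (ps b x * ps b x))))"
        by (simp add: algebra_simps)
      also have "\<dots> \<le> 0"
        using Ineq[of x] x tt by (intro mult_nonneg_nonpos) auto
      finally show "\<exists>y. DERIV (\<lambda>t. s * r t) x :> y \<and> y \<le> 0"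
        using DERIV_cmult[OF Dr[OF ax], of s] by blast
    qed
    then show ?thesis using r0 b0 by (simp add: algebra_simps)
  qed
  define F where "F x = G (sqrt (pi/2) * x * ps c (x^2)) - x" for x
  have K: "sqrt (2/pi) * sqrt (pi/2) = 1"
    by (simp add: real_sqrt_mult[symmetric])
  have K2: "(sqrt (pi/2))^2 = pi/2" by simp
  have DF: "DERIV F x :> r (x^2) - 1" if x: "0 \<le> x" "x \<le> z" for x
  proof -
    have "x^2 \<le> z^2" using x by (simp add: power_mono)
    then have ax: "\<bar>x^2\<bar> < R" using z by simp
    have Dcx: "DERIV (\<lambda>x. ps c (x^2)) x :> ps (diffs c) (x^2) * (2 * x)"
    proof -
      have "DERIV (\<lambda>x. x^2) x :> 2 * x" by (auto intro!: derivative_eq_intros)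
      from DERIV_chain2[where f="ps c" and g="\<lambda>x. x^2", OF Dc[OF ax] this] show ?thesis .
    qed
    have "DERIV F x :> sqrt (2/pi) * exp (-((sqrt (pi/2) * x * ps c (x^2))\<^sup>2)/2) *
        (sqrt (pi/2) * (ps c (x^2) + x * (ps (diffs c) (x^2) * (2 * x)))) - 1"
      unfolding F_def
      apply (rule DERIV_cong)
       apply (rule derivative_eq_intros G_deriv[THEN DERIV_chain2] Dcx refl)+
      apply (simp add: algebra_simps)
      done
    moreover have "sqrt (2/pi) * exp (-((sqrt (pi/2) * x * ps c (x^2))\<^sup>2)/2) *
        (sqrt (pi/2) * (ps c (x^2) + x * (ps (diffs c) (x^2) * (2 * x)))) - 1 = r (x^2) - 1"
    proof -
      have e: "-((sqrt (pi/2) * x * ps c (x^2))\<^sup>2)/2 = - qq * x^2 * (ps c (x^2))^2"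
        by (simp add: power_mult_distrib qq_def)
      have w: "ps c (x^2) + x * (ps (diffs c) (x^2) * (2 * x)) = ps b (x^2)"
        by (subst psb[OF ax]) (simp add: power2_eq_square algebra_simps)
      show ?thesis unfolding e w r_def using aux_K[OF K] by blast
    qed
    ultimately show ?thesis by simp
  qed
  have "s * F z \<le> s * F 0"
  proof (rule DERIV_nonpos_imp_nonincreasing[OF z(1), of "\<lambda>x. s * F x"])
    fix x assume x: "0 \<le> x" "x \<le> z"
    have "x^2 \<le> z^2" using x by (simp add: power_mono)
    then have "s * r (x^2) \<le> s" using rle[of "x^2"] z by simp
    then have "s * (r (x^2) - 1) \<le> 0" by (simp add: algebra_simps)
    then show "\<exists>y. DERIV (\<lambda>x. s * F x) x :> y \<and> y \<le> 0"
      using DERIV_cmult[OF DF[OF x], of s] by blast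
  qed
  then show ?thesis by (simp add: F_def G_0)
qed



definition trunc :: "nat \<Rightarrow> (nat \<Rightarrow> real) \<Rightarrow> nat \<Rightarrow> real" where
  "trunc N a k = (if k < N then a k else 0)"

lemma ps_trunc: "ps (trunc N a) t = (\<Sum>k<N. a k * t^k)"
  unfolding ps_def by (subst suminf_finite[of "{..<N}"]) (auto simp: trunc_def)

lemma summable_trunc: "summable (\<lambda>k. trunc N a k * t^k)"
  by (rule summable_finite[of "{..<N}"]) (auto simp: trunc_def)

lemma conv_trunc:
  assumes "k < N"
  shows "conv (trunc N a) (conv (trunc N b) (trunc N c)) k = conv a (conv b c) k"
  unfolding conv_def using assms
  by (intro sum.cong refl) (auto simp: trunc_def intro!: sum.cong)

lemma rec_trunc: "diffs (trunc N bb) k \<le> qq * conv (trunc N cc) (conv (trunc N bb) (trunc N bb)) k"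
proof (cases "Suc k < N")
  case True
  then have "diffs (trunc N bb) k = diffs bb k" by (simp add: diffs_def trunc_def)
  also have "\<dots> = qq * conv cc (conv bb bb) k" by (rule cubic)
  also have "\<dots> = qq * conv (trunc N cc) (conv (trunc N bb) (trunc N bb)) k"
    using True by (simp add: conv_trunc)
  finally show ?thesis by simp
next
  case False
  then have "diffs (trunc N bb) k = 0" by (simp add: diffs_def trunc_def)
  moreover have "0 \<le> conv (trunc N cc) (conv (trunc N bb) (trunc N bb)) k"
    by (intro conv_nonneg) (auto simp: trunc_def bb_nonneg cc_nonneg)
  ultimately show ?thesis using qq_pos by simp
qed

lemma summable_cc:
  assumes y1: "0 < y1"
  shows "summable (\<lambda>k. cc k * ((G y1)^2) ^ k)"
proof -
  define z1 where "z1 = G y1"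
  have z1: "0 < z1" using G_mono[OF y1] G_0 by (simp add: z1_def)
  have K: "0 < sqrt (pi/2)" by simp
  show ?thesis
  proof (rule summableI_nonneg_bounded)
    fix k
    show "0 \<le> cc k * ((G y1)^2) ^ k" using cc_nonneg by simp
  next
    fix N
    have "1 * (G (sqrt (pi/2) * z1 * ps (trunc N cc) (z1^2)) - z1) \<le> 0"
    proof (rule key[where b="trunc N bb" and R="z1^2 + 1"])
      show "\<And>k. 0 \<le> trunc N cc k" by (simp add: trunc_def cc_nonneg)
      show "\<And>k. trunc N bb k = real (2*k+1) * trunc N cc k" by (simp add: trunc_def bb_cc)
      show "summable (\<lambda>k. trunc N cc k * (z1^2 + 1)^k)" by (rule summable_trunc)
      show "1 * (trunc N bb 0 - 1) \<le> 0" by (simp add: trunc_def bb_0)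
      show "\<And>k. 1 * diffs (trunc N bb) k \<le> 1 * (qq * conv (trunc N cc) (conv (trunc N bb) (trunc N bb)) k)"
        using rec_trunc by simp
    qed (use z1 in auto)
    then have "G (sqrt (pi/2) * z1 * ps (trunc N cc) (z1^2)) \<le> G y1" by (simp add: z1_def)
    then have "sqrt (pi/2) * z1 * ps (trunc N cc) (z1^2) \<le> y1" by (simp add: G_le_iff)
    then have "ps (trunc N cc) (z1^2) \<le> y1 / (sqrt (pi/2) * z1)"
      using K z1 by (simp add: field_simps mult.commute)
    then show "(\<Sum>k<N. cc k * ((G y1)^2) ^ k) \<le> y1 / (sqrt (pi/2) * z1)"
      by (simp add: ps_trunc z1_def)
  qed
qed

lemma exact:
  assumes sum1: "summable (\<lambda>k. cc k * R^k)" and z: "0 \<le> z" "z^2 < R"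
  shows "G (sqrt (pi/2) * z * ps cc (z^2)) = z"
proof -
  have "1 * (G (sqrt (pi/2) * z * ps cc (z^2)) - z) \<le> 0"
    by (rule key[OF cc_nonneg bb_cc sum1 _ _ _ z]) (auto simp: bb_0 cubic)
  moreover have "(-1) * (G (sqrt (pi/2) * z * ps cc (z^2)) - z) \<le> 0"
    by (rule key[OF cc_nonneg bb_cc sum1 _ _ _ z]) (auto simp: bb_0 cubic)
  ultimately show ?thesis by simp
qed

theorem proposition6:
  fixes S T \<sigma>LN :: real
  assumes "S > 0" and "T > 0" and "\<sigma>LN > 0"
  defines "C \<equiv> BS S S T \<sigma>LN"
  shows "summable (\<lambda>k. pi ^ k * eta k / (4 ^ k * real (2 * k + 1)) * (C / S) ^ (2 * k))
    \<and> \<sigma>LN = sqrt (2 * pi / T) * (C / S) *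
        (\<Sum>k. pi ^ k * eta k / (4 ^ k * real (2 * k + 1)) * (C / S) ^ (2 * k))"
proof -
  define a where "a = \<sigma>LN * sqrt T / 2"
  have a: "0 < a" using assms by (simp add: a_def)
  have sT: "sqrt T * sqrt T = T" using assms by simp
  have dp: "d_plus S S T \<sigma>LN = a"
    using assms sT unfolding d_plus_def a_def by (simp add: field_simps power2_eq_square)
  have dm: "d_minus S S T \<sigma>LN = - a"
    using assms sT unfolding d_minus_def a_def by (simp add: field_simps power2_eq_square)
  define z0 where "z0 = C / S"
  have z0G: "z0 = G a"
    using assms(1) unfolding z0_def C_def BS_def dp dm G_def by (simp add: field_simps)
  have z0pos: "0 < z0" using G_mono[OF a] G_0 z0G by simp
  define t1 where "t1 = (G (a + 1))^2"
  have sum1: "summable (\<lambda>k. cc k * t1 ^ k)" unfolding t1_def by (rule summable_cc) (use a in simp)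
  have "z0 < G (a + 1)" using G_mono[of a "a+1"] z0G by simp
  then have z0t: "z0^2 < t1" unfolding t1_def using z0pos by (simp add: power_strict_mono)
  have "G (sqrt (pi/2) * z0 * ps cc (z0^2)) = z0"
    by (rule exact[OF sum1 _ z0t]) (use z0pos in simp)
  then have GY: "G (sqrt (pi/2) * z0 * ps cc (z0^2)) = G a" using z0G by simp
  have Y: "sqrt (pi/2) * z0 * ps cc (z0^2) = a"
    using G_le_iff[of "sqrt (pi/2) * z0 * ps cc (z0^2)" a] G_le_iff[of a "sqrt (pi/2) * z0 * ps cc (z0^2)"] GY
    by linarith
  have trm: "(\<lambda>k. pi ^ k * eta k / (4 ^ k * real (2 * k + 1)) * z0 ^ (2 * k)) = (\<lambda>k. cc k * (z0^2) ^ k)"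
  proof (rule ext)
    fix k
    have e: "z0 ^ (2 * k) = (z0^2)^k" by (simp add: power_mult)
    show "pi ^ k * eta k / (4 ^ k * real (2 * k + 1)) * z0 ^ (2 * k) = cc k * (z0^2) ^ k"
      unfolding e by (simp add: cc_def bb_def qq_def power_divide)
  qed
  have summ: "summable (\<lambda>k. cc k * (z0^2) ^ k)"
    by (rule powser_inside[OF sum1]) (use z0t in simp)
  have sq: "sqrt (2 * pi / T) = 2 * sqrt (pi/2) / sqrt T"
  proof -
    have "sqrt (2 * pi) = sqrt (4 * (pi/2))" by simp
    also have "\<dots> = sqrt 4 * sqrt (pi/2)" by (simp only: real_sqrt_mult)
    finally have "sqrt (2 * pi) = sqrt 4 * sqrt (pi/2)" .
    then show ?thesis by (simp add: real_sqrt_divide)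
  qed
  have "\<sigma>LN = 2 * a / sqrt T" using assms by (simp add: a_def)
  also have "\<dots> = sqrt (2 * pi / T) * z0 * ps cc (z0^2)"
    unfolding sq Y[symmetric] by simp
  finally show ?thesis
    using summ unfolding z0_def[symmetric] trm ps_def by simp
qed


end
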